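(* For every integer $n \ge 8$, $$M(n) \ge \tfrac12\, c^n, \qquad\text{where } c = 2132^{1/10} = 2.152\ldots$$
   Context: For a positive integer $n$, $M(n)$ denotes the number of permutations $(t_1,\dots,t_n)$ of $\{1,2,\ldots,n\}$ that do not contain a 3-term arithmetic progression as a subsequence. Here a sequence contains a 3-term arithmetic progression (3AP) as a subsequence if there are indices $i<j<k$ with $t_j - t_i = t_k - t_j \neq 0$; the common difference may be positive or negative. For example, $M(4)=10$. *)

theory Defs
  imports Complex_Main
begin

definition has_3AP :: "nat list \<Rightarrow> bool" where
  "has_3AP t \<longleftrightarrow> (\<exists>i j k. i < j \<and> j < k \<and> k < length t \<and>
      int (t ! j) - int (t ! i) = int (t ! k) - int (t ! j) \<and>
      int (t ! j) - int (t ! i) \<noteq> 0)"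

definition perms_of :: "nat \<Rightarrow> nat list set" where
  "perms_of n = {t. distinct t \<and> set t = {1..n}}"

definition M :: "nat \<Rightarrow> nat" where
  "M n = card {t \<in> perms_of n. \<not> has_3AP t}"

end

theory Submission
  imports Defs
begin

definition V :: "nat \<Rightarrow> nat list set" where
  "V n = {t \<in> perms_of n. \<not> has_3AP t}"

lemma M_V: "M n = card (V n)"
  by (simp add: M_def V_def)

lemma perms_of_length: "t \<in> perms_of n \<Longrightarrow> length t = n"
  unfolding perms_of_def using distinct_card by fastforce

lemma finite_V: "finite (V n)"
proof -
  have "V n \<subseteq> {xs. set xs \<subseteq> {1..n} \<and> length xs = n}"
    using perms_of_length unfolding V_def perms_of_def by auto
  thus ?thesis using finite_lists_length_eq[of "{1..n}" n] finite_subset by auto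
qed

lemma has_3AP_map:
  assumes "\<forall>x\<in>set s. int (f x) = 2 * int x - d" and "has_3AP (map f s)"
  shows "has_3AP s"
proof -
  obtain i j k where ijk: "i < j" "j < k" "k < length s"
    "int (map f s ! j) - int (map f s ! i) = int (map f s ! k) - int (map f s ! j)"
    "int (map f s ! j) - int (map f s ! i) \<noteq> 0"
    using assms(2) unfolding has_3AP_def by auto
  have fi: "int (map f s ! i) = 2 * int (s!i) - d" using assms(1) ijk by (simp add: nth_mem)
  have fj: "int (map f s ! j) = 2 * int (s!j) - d" using assms(1) ijk by (simp add: nth_mem)
  have fk: "int (map f s ! k) = 2 * int (s!k) - d" using assms(1) ijk by (simp add: nth_mem)
  show ?thesis unfolding has_3AP_def
    using ijk fi fj fk by (intro exI[of _ i] exI[of _ j] exI[of _ k]) auto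
qed

lemma has_3AP_append_par:
  assumes px: "\<forall>x\<in>set xs. even x = p" and py: "\<forall>y\<in>set ys. even y = (\<not>p)"
    and h: "has_3AP (xs @ ys)"
  shows "has_3AP xs \<or> has_3AP ys"
proof -
  let ?t = "xs @ ys" and ?l = "length xs"
  obtain i j k where ijk: "i < j" "j < k" "k < length ?t"
    "int (?t ! j) - int (?t ! i) = int (?t ! k) - int (?t ! j)"
    "int (?t ! j) - int (?t ! i) \<noteq> 0"
    using h unfolding has_3AP_def by auto
  show ?thesis
  proof (cases "k < ?l")
    case True
    hence "has_3AP xs" unfolding has_3AP_def using ijk
      by (intro exI[of _ i] exI[of _ j] exI[of _ k]) (auto simp: nth_append)
    thus ?thesis ..
  next
    case kl: False
    show ?thesis
    proof (cases "i < ?l")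
      case False
      hence "has_3AP ys" unfolding has_3AP_def using ijk kl
        by (intro exI[of _ "i - ?l"] exI[of _ "j - ?l"] exI[of _ "k - ?l"]) (auto simp: nth_append)
      thus ?thesis ..
    next
      case il: True
      have e1: "?t ! i + ?t ! k = 2 * ?t ! j" using ijk(4) by linarith
      have "even (?t ! i) = p" using il px by (simp add: nth_append nth_mem)
      moreover have "even (?t ! k) = (\<not> p)" using kl ijk py by (simp add: nth_append nth_mem)
      moreover have "even (?t ! i + ?t ! k)" using e1 by simp
      ultimately show ?thesis by auto
    qed
  qed
qed


definition okp :: "nat \<Rightarrow> nat \<Rightarrow> nat \<Rightarrow> bool" where
  "okp n x y \<longleftrightarrow> \<not> (1 \<le> 2 * int x - int y \<and> 2 * int x - int y \<le> int n) \<and>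
                   \<not> (1 \<le> 2 * int y - int x \<and> 2 * int y - int x \<le> int n)"

lemma adjswap_nth:
  assumes "m < length xs' + 2 + length ys'"
  shows "(xs' @ y # x # ys') ! m = (xs' @ x # y # ys') !
           (if m = length xs' then Suc (length xs') else if m = Suc (length xs') then length xs' else m)"
  using assms by (auto simp: nth_append nth_Cons split: nat.splits)

lemma adjswap:
  assumes h: "\<not> has_3AP (xs' @ x # y # ys')"
    and rng: "set (xs' @ x # y # ys') \<subseteq> {1..n}"
    and ok: "okp n x y"
  shows "\<not> has_3AP (xs' @ y # x # ys')"
proof
  let ?t = "xs' @ x # y # ys'" and ?s = "xs' @ y # x # ys'" and ?l = "length xs'"
  define g where "g m = (if m = ?l then Suc ?l else if m = Suc ?l then ?l else m)" for m
  assume "has_3AP ?s"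
  then obtain i j k where ijk: "i < j" "j < k" "k < length ?s"
    "int (?s ! j) - int (?s ! i) = int (?s ! k) - int (?s ! j)"
    "int (?s ! j) - int (?s ! i) \<noteq> 0"
    unfolding has_3AP_def by auto
  have len: "length ?s = ?l + 2 + length ys'" "length ?t = ?l + 2 + length ys'" by auto
  have sn: "\<And>m. m < length ?s \<Longrightarrow> ?s ! m = ?t ! g m"
    using adjswap_nth len unfolding g_def by metis
  have gl: "\<And>m. m < length ?s \<Longrightarrow> g m < length ?t" unfolding g_def using len by auto
  have inr: "\<And>m. m < length ?t \<Longrightarrow> 1 \<le> ?t ! m \<and> ?t ! m \<le> n"
    using rng nth_mem by (metis atLeastAtMost_iff subsetD)
  have tx: "?t ! ?l = x" and ty: "?t ! Suc ?l = y" by (auto simp: nth_append)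
  show False
  proof (cases "i = ?l \<and> j = Suc ?l")
    case True
    hence "g k = k" using ijk unfolding g_def by auto
    hence "?s ! k = ?t ! k" using sn ijk by auto
    moreover have "?s ! i = y" "?s ! j = x" using True by (auto simp: nth_append)
    moreover have "1 \<le> ?t ! k \<and> ?t ! k \<le> n" using inr ijk len by auto
    ultimately show False using ok ijk(4) unfolding okp_def by auto
  next
    case c1: False
    show False
    proof (cases "j = ?l \<and> k = Suc ?l")
      case True
      hence "g i = i" using ijk unfolding g_def by auto
      hence "?s ! i = ?t ! i" using sn ijk by auto
      moreover have "?s ! j = y" "?s ! k = x" using True by (auto simp: nth_append)
      moreover have "1 \<le> ?t ! i \<and> ?t ! i \<le> n" using inr ijk len by auto
      ultimately show False using ok ijk(4) unfolding okp_def by auto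
    next
      case c2: False
      have "g i < g j" "g j < g k" using ijk c1 c2 unfolding g_def by auto
      moreover have "g k < length ?t" using gl ijk by auto
      ultimately have "has_3AP ?t" unfolding has_3AP_def using ijk sn
        by (intro exI[of _ "g i"] exI[of _ "g j"] exI[of _ "g k"]) auto
      thus False using h by simp
    qed
  qed
qed


definition Ev :: "nat list \<Rightarrow> nat list" where "Ev s = map (\<lambda>x. 2*x) s"
definition Od :: "nat list \<Rightarrow> nat list" where "Od s = map (\<lambda>x. 2*x - 1) s"
definition sw :: "nat list \<Rightarrow> nat list \<Rightarrow> nat list" where
  "sw xs ys = butlast xs @ hd ys # last xs # tl ys"

lemma set_EO: "(\<lambda>x. 2*x) ` {1..n div 2} \<union> (\<lambda>x. 2*x - 1) ` {1..n - n div 2} = {(1::nat)..n}"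
proof (intro equalityI subsetI)
  fix y assume "y \<in> (\<lambda>x. 2*x) ` {1..n div 2} \<union> (\<lambda>x. 2*x - 1) ` {1..n - n div 2}"
  thus "y \<in> {1..n}" by auto
next
  fix y :: nat assume y: "y \<in> {1..n}"
  show "y \<in> (\<lambda>x. 2*x) ` {1..n div 2} \<union> (\<lambda>x. 2*x - 1) ` {1..n - n div 2}"
  proof (cases "even y")
    case True
    hence "y = 2 * (y div 2)" "y div 2 \<in> {1..n div 2}" using y by auto
    thus ?thesis by blast
  next
    case False
    have "y = 2 * ((y+1) div 2) - 1" using False by presburger
    moreover have "(y+1) div 2 \<in> {1..n - n div 2}" using y False by simp presburger
    ultimately show ?thesis by blast
  qed
qed

lemma pos_of_perm: "t \<in> perms_of n \<Longrightarrow> x \<in> set t \<Longrightarrow> 1 \<le> x \<and> x \<le> n"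
  unfolding perms_of_def by auto

lemma Ev_even: "\<forall>x\<in>set (Ev s). even x" unfolding Ev_def by auto
lemma Od_odd: "\<forall>x\<in>set u. 1 \<le> x \<Longrightarrow> \<forall>x\<in>set (Od u). odd x" unfolding Od_def by auto

lemma perm_EO:
  assumes s: "s \<in> perms_of (n div 2)" and u: "u \<in> perms_of (n - n div 2)"
  shows "Ev s @ Od u \<in> perms_of n" "Od u @ Ev s \<in> perms_of n"
proof -
  have u1: "\<forall>x\<in>set u. 1 \<le> x" using pos_of_perm[OF u] by auto
  have d1: "distinct (Ev s)" using s unfolding Ev_def perms_of_def
    by (auto simp: distinct_map inj_on_def)
  have d2: "distinct (Od u)" using u u1 unfolding Od_def perms_of_def
    by (auto simp: distinct_map inj_on_def)
  have dj: "set (Ev s) \<inter> set (Od u) = {}" using Ev_even Od_odd[OF u1] by blast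
  have st: "set (Ev s) \<union> set (Od u) = {1..n}"
    using s u set_EO[of n] unfolding Ev_def Od_def perms_of_def by simp
  show "Ev s @ Od u \<in> perms_of n" "Od u @ Ev s \<in> perms_of n"
    unfolding perms_of_def using d1 d2 dj st by auto
qed

lemma V_EO:
  assumes s: "s \<in> V (n div 2)" and u: "u \<in> V (n - n div 2)"
  shows "Ev s @ Od u \<in> V n" "Od u @ Ev s \<in> V n"
proof -
  have sp: "s \<in> perms_of (n div 2)" and un: "u \<in> perms_of (n - n div 2)"
    and hs: "\<not> has_3AP s" and hu: "\<not> has_3AP u" using s u unfolding V_def by auto
  have u1: "\<forall>x\<in>set u. 1 \<le> x" using pos_of_perm[OF un] by auto
  have "\<not> has_3AP (Ev s)"
    using has_3AP_map[of s "\<lambda>x. 2*x" 0] hs unfolding Ev_def by auto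
  moreover have "\<not> has_3AP (Od u)"
    using has_3AP_map[of u "\<lambda>x. 2*x - 1" 1] hu u1 unfolding Od_def by force
  ultimately have "\<not> has_3AP (Ev s @ Od u)" "\<not> has_3AP (Od u @ Ev s)"
    using has_3AP_append_par[of "Ev s" True "Od u"] has_3AP_append_par[of "Od u" False "Ev s"]
      Ev_even Od_odd[OF u1] by auto
  thus "Ev s @ Od u \<in> V n" "Od u @ Ev s \<in> V n"
    using perm_EO[OF sp un] unfolding V_def by auto
qed

lemma sw_split:
  assumes "xs \<noteq> []" "ys \<noteq> []"
  shows "xs @ ys = butlast xs @ last xs # hd ys # tl ys"
  using assms by simp

lemma sw_V:
  assumes xs: "xs \<noteq> []" and ys: "ys \<noteq> []" and t: "xs @ ys \<in> V n"
    and ok: "okp n (last xs) (hd ys)"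
  shows "sw xs ys \<in> V n"
proof -
  have e: "xs @ ys = butlast xs @ last xs # hd ys # tl ys" using sw_split[OF xs ys] .
  have p: "xs @ ys \<in> perms_of n" and h: "\<not> has_3AP (xs @ ys)" using t unfolding V_def by auto
  have rng: "set (xs @ ys) \<subseteq> {1..n}" using p unfolding perms_of_def by auto
  have "\<not> has_3AP (butlast xs @ hd ys # last xs # tl ys)"
    using adjswap[of "butlast xs" "last xs" "hd ys" "tl ys" n] h rng ok e by simp
  moreover have "sw xs ys \<in> perms_of n"
    using p unfolding perms_of_def sw_def e by (auto simp: insert_commute)
  ultimately show ?thesis unfolding V_def sw_def by auto
qed

lemma filter_sw:
  assumes xs: "xs \<noteq> []" and ys: "ys \<noteq> []"
    and px: "\<forall>x\<in>set xs. P x" and py: "\<forall>y\<in>set ys. \<not> P y"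
  shows "filter P (sw xs ys) = xs" "filter (\<lambda>x. \<not> P x) (sw xs ys) = ys"
proof -
  have e: "xs = butlast xs @ [last xs]" "ys = hd ys # tl ys" using xs ys by auto
  have a: "\<forall>x\<in>set (butlast xs). P x" "P (last xs)" "\<not> P (hd ys)" "\<forall>y\<in>set (tl ys). \<not> P y"
    using px py xs ys by (auto dest: in_set_butlastD list.set_sel)
  show "filter P (sw xs ys) = xs"
    using a unfolding sw_def by (subst (3) e(1)) (simp add: filter_True filter_False)
  show "filter (\<lambda>x. \<not> P x) (sw xs ys) = ys"
    using a unfolding sw_def by (subst (3) e(2)) (simp add: filter_True filter_False)
qed

lemma sw_ne:
  assumes xs: "xs \<noteq> []" and ys: "ys \<noteq> []" and d: "last xs \<noteq> hd ys"
  shows "sw xs ys \<noteq> xs @ ys"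
  using d unfolding sw_def sw_split[OF xs ys] by simp

lemma hd_sw: "2 \<le> length xs \<Longrightarrow> hd (sw xs ys) = hd xs"
  unfolding sw_def by (cases xs rule: rev_cases) (auto simp: hd_append)


lemma V_pos: "u \<in> V m \<Longrightarrow> \<forall>x\<in>set u. 1 \<le> x"
  unfolding V_def using pos_of_perm by auto

lemma V_len: "u \<in> V m \<Longrightarrow> length u = m"
  unfolding V_def using perms_of_length by auto

lemma filt_EO:
  assumes "\<forall>x\<in>set u. 1 \<le> x"
  shows "filter even (Ev s) = Ev s" "filter odd (Ev s) = []"
        "filter even (Od u) = []" "filter odd (Od u) = Od u"
  using Ev_even[of s] Od_odd[OF assms] by (auto simp: filter_True filter_False)

lemma dec_E: "map (\<lambda>x. x div 2) (Ev s) = s" unfolding Ev_def by (simp add: map_idI)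
lemma dec_O: "\<forall>x\<in>set u. 1 \<le> x \<Longrightarrow> map (\<lambda>x. (x + 1) div 2) (Od u) = u"
  unfolding Od_def by (auto intro!: map_idI)

lemma Ev_ne: "s \<noteq> [] \<Longrightarrow> Ev s \<noteq> []" unfolding Ev_def by simp
lemma Od_ne: "s \<noteq> [] \<Longrightarrow> Od s \<noteq> []" unfolding Od_def by simp

lemma main:
  assumes n4: "4 \<le> n" and A: "A \<subseteq> V (n div 2)" and B: "B \<subseteq> V (n - n div 2)"
    and C: "C \<subseteq> V n"
    and Cd: "\<forall>t\<in>C. t \<noteq> filter even t @ filter odd t \<and> t \<noteq> filter odd t @ filter even t \<and>
                  t \<noteq> sw (filter even t) (filter odd t) \<and> t \<noteq> sw (filter odd t) (filter even t)"
  shows "2 * card A * card B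
         + card {p \<in> A \<times> B. okp n (2 * last (fst p)) (2 * hd (snd p) - 1)}
         + card {p \<in> B \<times> A. okp n (2 * last (fst p) - 1) (2 * hd (snd p))}
         + card C \<le> M n"
proof -
  let ?a = "n div 2" and ?b = "n - n div 2"
  define S3 where "S3 = {p \<in> A \<times> B. okp n (2 * last (fst p)) (2 * hd (snd p) - 1)}"
  define S4 where "S4 = {p \<in> B \<times> A. okp n (2 * last (fst p) - 1) (2 * hd (snd p))}"
  define f1 where "f1 = (\<lambda>p::nat list \<times> nat list. Ev (fst p) @ Od (snd p))"
  define f2 where "f2 = (\<lambda>p::nat list \<times> nat list. Od (snd p) @ Ev (fst p))"
  define f3 where "f3 = (\<lambda>p::nat list \<times> nat list. sw (Ev (fst p)) (Od (snd p)))"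
  define f4 where "f4 = (\<lambda>p::nat list \<times> nat list. sw (Od (fst p)) (Ev (snd p)))"
  define dec where "dec = (\<lambda>t::nat list. (map (\<lambda>x. x div 2) (filter even t), map (\<lambda>x. (x + 1) div 2) (filter odd t)))"
  define F1 where "F1 = f1 ` (A \<times> B)"
  define F2 where "F2 = f2 ` (A \<times> B)"
  define F3 where "F3 = f3 ` S3"
  define F4 where "F4 = f4 ` S4"
  have fin: "finite (V n)" "finite (V ?a)" "finite (V ?b)" using finite_V by auto
  have la: "\<And>s. s \<in> A \<Longrightarrow> length s = ?a \<and> (\<forall>x\<in>set s. 1 \<le> x) \<and> s \<noteq> []"
    using A V_len V_pos n4 by fastforce
  have lb: "\<And>s. s \<in> B \<Longrightarrow> length s = ?b \<and> (\<forall>x\<in>set s. 1 \<le> x) \<and> s \<noteq> []"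
    using B V_len V_pos n4 by fastforce
  have a2: "2 \<le> ?a" "2 \<le> ?b" using n4 by auto
  have F1V: "F1 \<subseteq> V n"
  proof
    fix t assume "t \<in> F1"
    then obtain s u where "s \<in> A" "u \<in> B" "t = Ev s @ Od u" unfolding F1_def f1_def by auto
    thus "t \<in> V n" using V_EO(1)[of s n u] A B by auto
  qed
  have F2V: "F2 \<subseteq> V n"
  proof
    fix t assume "t \<in> F2"
    then obtain s u where "s \<in> A" "u \<in> B" "t = Od u @ Ev s" unfolding F2_def f2_def by auto
    thus "t \<in> V n" using V_EO(2)[of s n u] A B by auto
  qed
  have F3V: "F3 \<subseteq> V n"
  proof
    fix t assume "t \<in> F3"
    then obtain s u where su: "s \<in> A" "u \<in> B" "okp n (2 * last s) (2 * hd u - 1)" "t = sw (Ev s) (Od u)"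
      unfolding F3_def S3_def f3_def by auto
    have "last (Ev s) = 2 * last s" "hd (Od u) = 2 * hd u - 1"
      using la[OF su(1)] lb[OF su(2)] unfolding Ev_def Od_def by (auto simp: last_map hd_map)
    thus "t \<in> V n" using sw_V[of "Ev s" "Od u" n] V_EO[of s n u] su A B la lb Ev_ne Od_ne by auto
  qed
  have F4V: "F4 \<subseteq> V n"
  proof
    fix t assume "t \<in> F4"
    then obtain s u where su: "s \<in> A" "u \<in> B" "okp n (2 * last u - 1) (2 * hd s)" "t = sw (Od u) (Ev s)"
      unfolding F4_def S4_def f4_def by auto
    have "last (Od u) = 2 * last u - 1" "hd (Ev s) = 2 * hd s"
      using la[OF su(1)] lb[OF su(2)] unfolding Ev_def Od_def by (auto simp: last_map hd_map)
    thus "t \<in> V n" using sw_V[of "Od u" "Ev s" n] V_EO[of s n u] su A B la lb Ev_ne Od_ne by auto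
  qed
  have d1: "\<And>p. p \<in> A \<times> B \<Longrightarrow> dec (f1 p) = p \<and> f1 p = filter even (f1 p) @ filter odd (f1 p) \<and> even (hd (f1 p))"
  proof -
    fix p assume p: "p \<in> A \<times> B"
    obtain s u where su: "p = (s, u)" "s \<in> A" "u \<in> B" using p by auto
    have "hd (Ev s) = 2 * hd s" using la[OF su(2)] unfolding Ev_def by (simp add: hd_map)
    thus "dec (f1 p) = p \<and> f1 p = filter even (f1 p) @ filter odd (f1 p) \<and> even (hd (f1 p))"
      using filt_EO[OF conjunct1[OF conjunct2[OF lb[OF su(3)]]]] la[OF su(2)] lb[OF su(3)] dec_E dec_O su Ev_ne
      unfolding dec_def f1_def by auto
  qed
  have d2: "\<And>p. p \<in> A \<times> B \<Longrightarrow> dec (f2 p) = p \<and> f2 p = filter odd (f2 p) @ filter even (f2 p) \<and> odd (hd (f2 p))"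
  proof -
    fix p assume p: "p \<in> A \<times> B"
    obtain s u where su: "p = (s, u)" "s \<in> A" "u \<in> B" using p by auto
    have "hd u \<in> set u" using lb[OF su(3)] by simp
    hence hu1: "hd u \<ge> 1" using lb[OF su(3)] by auto
    have "hd (Od u) = 2 * hd u - 1" using lb[OF su(3)] unfolding Od_def by (auto simp: hd_map)
    hence "odd (hd (Od u))" using hu1 by presburger
    hence "odd (hd (f2 p))" using su Od_ne lb[OF su(3)] unfolding f2_def by simp
    thus "dec (f2 p) = p \<and> f2 p = filter odd (f2 p) @ filter even (f2 p) \<and> odd (hd (f2 p))"
      using hu1 filt_EO[OF conjunct1[OF conjunct2[OF lb[OF su(3)]]]] la[OF su(2)] lb[OF su(3)] dec_E dec_O su Od_ne
      unfolding dec_def f2_def by auto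
  qed
  have d3: "\<And>p. p \<in> S3 \<Longrightarrow> dec (f3 p) = p \<and> f3 p = sw (filter even (f3 p)) (filter odd (f3 p))
            \<and> f3 p \<noteq> filter even (f3 p) @ filter odd (f3 p) \<and> even (hd (f3 p))"
  proof -
    fix p assume p: "p \<in> S3"
    obtain s u where su: "p = (s, u)" "s \<in> A" "u \<in> B" using p unfolding S3_def by auto
    have ne: "Ev s \<noteq> []" "Od u \<noteq> []" using la[OF su(2)] lb[OF su(3)] Ev_ne Od_ne by auto
    have fe: "filter even (sw (Ev s) (Od u)) = Ev s" "filter odd (sw (Ev s) (Od u)) = Od u"
      using filter_sw[OF ne, of even] Ev_even[of s] Od_odd[of u] lb[OF su(3)] by auto
    have hh: "hd (sw (Ev s) (Od u)) = hd (Ev s)" using hd_sw[of "Ev s"] la[OF su(2)] a2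
      unfolding Ev_def by auto
    have "hd (Ev s) = 2 * hd s" using la[OF su(2)] unfolding Ev_def by (simp add: hd_map)
    moreover have "last (Ev s) \<noteq> hd (Od u)"
      using Ev_even[of s] Od_odd[of u] lb[OF su(3)] ne by (metis last_in_set list.set_sel(1))
    ultimately show "dec (f3 p) = p \<and> f3 p = sw (filter even (f3 p)) (filter odd (f3 p))
            \<and> f3 p \<noteq> filter even (f3 p) @ filter odd (f3 p) \<and> even (hd (f3 p))"
      using fe dec_E dec_O lb[OF su(3)] su hh sw_ne[OF ne] unfolding dec_def f3_def by auto
  qed
  have d4: "\<And>p. p \<in> S4 \<Longrightarrow> dec (f4 p) = prod.swap p \<and> f4 p = sw (filter odd (f4 p)) (filter even (f4 p))
            \<and> f4 p \<noteq> filter odd (f4 p) @ filter even (f4 p) \<and> odd (hd (f4 p))"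
  proof -
    fix p assume p: "p \<in> S4"
    obtain s u where su: "p = (u, s)" "s \<in> A" "u \<in> B" using p unfolding S4_def by auto
    have ne: "Ev s \<noteq> []" "Od u \<noteq> []" using la[OF su(2)] lb[OF su(3)] Ev_ne Od_ne by auto
    have fe: "filter odd (sw (Od u) (Ev s)) = Od u" "filter (\<lambda>x. \<not> odd x) (sw (Od u) (Ev s)) = Ev s"
      using filter_sw[OF ne(2) ne(1), of odd] Ev_even[of s] Od_odd[of u] lb[OF su(3)] by auto
    have hh: "hd (sw (Od u) (Ev s)) = hd (Od u)" using hd_sw[of "Od u"] lb[OF su(3)] a2
      unfolding Od_def by auto
    have "hd u \<in> set u" using lb[OF su(3)] by simp
    hence hu1: "hd u \<ge> 1" using lb[OF su(3)] by auto
    have "hd (Od u) = 2 * hd u - 1" using lb[OF su(3)] unfolding Od_def by (auto simp: hd_map)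
    hence "odd (hd (Od u))" using hu1 by presburger
    hence "odd (hd (f4 p))" using hh su unfolding f4_def by simp
    moreover have "last (Od u) \<noteq> hd (Ev s)"
      using Ev_even[of s] Od_odd[of u] lb[OF su(3)] ne by (metis last_in_set list.set_sel(1))
    ultimately show "dec (f4 p) = prod.swap p \<and> f4 p = sw (filter odd (f4 p)) (filter even (f4 p))
            \<and> f4 p \<noteq> filter odd (f4 p) @ filter even (f4 p) \<and> odd (hd (f4 p))"
      using hu1 fe dec_E dec_O lb[OF su(3)] su hh sw_ne[OF ne(2) ne(1)] unfolding dec_def f4_def by auto
  qed
  have i1: "inj_on f1 (A \<times> B)" by (rule inj_on_inverseI[of _ dec]) (use d1 in blast)
  have i2: "inj_on f2 (A \<times> B)" by (rule inj_on_inverseI[of _ dec]) (use d2 in blast)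
  have i3: "inj_on f3 S3" by (rule inj_on_inverseI[of _ dec]) (use d3 in blast)
  have i4: "inj_on f4 S4" by (rule inj_on_inverseI[of _ "prod.swap \<circ> dec"]) (use d4 in auto)
  have c1: "card F1 = card A * card B" unfolding F1_def using card_image[OF i1] card_cartesian_product by metis
  have c2: "card F2 = card A * card B" unfolding F2_def using card_image[OF i2] card_cartesian_product by metis
  have c3: "card F3 = card S3" unfolding F3_def using card_image[OF i3] .
  have c4: "card F4 = card S4" unfolding F4_def using card_image[OF i4] .
  have fF: "finite F1" "finite F2" "finite F3" "finite F4" "finite C"
    using finite_subset[OF F1V fin(1)] finite_subset[OF F2V fin(1)] finite_subset[OF F3V fin(1)]
      finite_subset[OF F4V fin(1)] finite_subset[OF C fin(1)] by auto
  have D12: "F1 \<inter> F2 = {}" unfolding F1_def F2_def using d1 d2 by fastforce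
  have D3: "(F1 \<union> F2) \<inter> F3 = {}" unfolding F1_def F2_def F3_def using d1 d2 d3 by fastforce
  have D4: "(F1 \<union> F2 \<union> F3) \<inter> F4 = {}" unfolding F1_def F2_def F3_def F4_def using d1 d2 d3 d4 by fastforce
  have D5: "(F1 \<union> F2 \<union> F3 \<union> F4) \<inter> C = {}" unfolding F1_def F2_def F3_def F4_def using d1 d2 d3 d4 Cd by fastforce
  have "card (F1 \<union> F2 \<union> F3 \<union> F4 \<union> C) = card F1 + card F2 + card F3 + card F4 + card C"
    using fF D12 D3 D4 D5 by (simp add: card_Un_disjoint)
  moreover have "card (F1 \<union> F2 \<union> F3 \<union> F4 \<union> C) \<le> card (V n)"
    using F1V F2V F3V F4V C fin(1) by (intro card_mono) auto
  ultimately show ?thesis using c1 c2 c3 c4 unfolding M_V S3_def S4_def by simp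
qed


fun mem :: "nat \<Rightarrow> nat list \<Rightarrow> bool" where
  "mem x [] = False" | "mem x (y#ys) = (x = y \<or> mem x ys)"

lemma mem_iff: "mem x F = (x \<in> set F)" by (induction F) auto

fun chk :: "nat list \<Rightarrow> nat list \<Rightarrow> nat list \<Rightarrow> bool" where
  "chk F P [] = True"
| "chk F P (x#xs) = (\<not> mem x F \<and> chk (x # map (\<lambda>p. 2*x - p) P @ F) (x#P) xs)"

lemma chk_avoid: "chk F P xs \<Longrightarrow> y \<in> set xs \<Longrightarrow> y \<notin> set F"
  by (induction F P xs rule: chk.induct) (auto simp: mem_iff)

lemma chk_pairs:
  "chk F P xs \<Longrightarrow> j < k \<Longrightarrow> k < length xs \<Longrightarrow>
     xs!k \<noteq> xs!j \<and> (\<forall>p \<in> set P \<union> set (take j xs). xs!k \<noteq> 2*(xs!j) - p)"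
proof (induction F P xs arbitrary: j k rule: chk.induct)
  case (1 F P)
  then show ?case by simp
next
  case (2 F P x xs)
  let ?F = "x # map (\<lambda>p. 2*x - p) P @ F"
  have c: "chk ?F (x#P) xs" and nm: "\<not> mem x F" using 2(2) by auto
  obtain k' where k: "k = Suc k'" using 2(3) by (cases k) auto
  have k': "k' < length xs" using 2(4) k by simp
  show ?case
  proof (cases j)
    case 0
    have "xs ! k' \<notin> set ?F" using chk_avoid[OF c] k' by (simp add: nth_mem)
    thus ?thesis using 0 k by auto
  next
    case (Suc j')
    have "j' < k'" using 2(3) Suc k by simp
    from 2(1)[OF c this k'] show ?thesis using Suc k by auto
  qed
qed

lemma chk_sound:
  assumes "chk [] [] t"
  shows "distinct t" "\<not> has_3AP t"
proof -
  show "distinct t"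
    unfolding distinct_conv_nth
  proof (intro allI impI)
    fix i j assume ij: "i < length t" "j < length t" "i \<noteq> j"
    show "t ! i \<noteq> t ! j"
    proof (cases "i < j")
      case True thus ?thesis using chk_pairs[OF assms True ij(2)] by auto
    next
      case False hence "j < i" using ij by simp
      thus ?thesis using chk_pairs[OF assms _ ij(1)] by auto
    qed
  qed
  show "\<not> has_3AP t"
  proof
    assume "has_3AP t"
    then obtain i j k where ijk: "i < j" "j < k" "k < length t"
      "int (t ! j) - int (t ! i) = int (t ! k) - int (t ! j)"
      unfolding has_3AP_def by auto
    have "t ! i \<in> set (take j t)" using ijk by (simp add: in_set_conv_nth) (metis nth_take ijk(1) ijk(2) ijk(3) less_trans length_take min_less_iff_conj)
    hence ne: "t ! k \<noteq> 2 * (t ! j) - t ! i" using chk_pairs[OF assms ijk(2) ijk(3)] by auto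
    have "t ! i \<le> 2 * t ! j" using ijk(4) by linarith
    hence "int (2 * t ! j - t ! i) = int (t ! k)" using ijk(4) by (simp add: of_nat_diff)
    thus False using ne by simp
  qed
qed

definition cert :: "nat \<Rightarrow> nat list \<Rightarrow> bool" where
  "cert m t \<longleftrightarrow> length t = m \<and> list_all (\<lambda>x. 1 \<le> x \<and> x \<le> m) t \<and> chk [] [] t"

lemma cert_V: assumes "cert m t" shows "t \<in> V m"
proof -
  have d: "distinct t" and h: "\<not> has_3AP t" using chk_sound assms unfolding cert_def by auto
  have l: "length t = m" and r: "set t \<subseteq> {1..m}" using assms unfolding cert_def by (auto simp: list_all_iff)
  have "card (set t) = m" using distinct_card[OF d] l by simp
  hence "set t = {1..m}" using r by (intro card_subset_eq) auto
  thus ?thesis using d h unfolding V_def perms_of_def by auto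
qed

fun lexlt :: "nat list \<Rightarrow> nat list \<Rightarrow> bool" where
  "lexlt [] [] = False"
| "lexlt [] (y#ys) = True"
| "lexlt (x#xs) [] = False"
| "lexlt (x#xs) (y#ys) = (x < y \<or> (x = y \<and> lexlt xs ys))"

lemma lexlt_irrefl: "\<not> lexlt xs xs" by (induction xs) auto

lemma lexlt_trans: "lexlt xs ys \<Longrightarrow> lexlt ys zs \<Longrightarrow> lexlt xs zs"
proof (induction xs ys arbitrary: zs rule: lexlt.induct)
  case (4 x xs y ys)
  then show ?case by (cases zs) auto
qed (auto elim: lexlt.elims)

fun adjs :: "nat list list \<Rightarrow> bool" where
  "adjs (x#y#zs) = (lexlt x y \<and> adjs (y#zs))"
| "adjs _ = True"

lemma adjs_all: "adjs (x#L) \<Longrightarrow> \<forall>y\<in>set L. lexlt x y"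
proof (induction L arbitrary: x)
  case Nil then show ?case by simp
next
  case (Cons y L)
  then show ?case using lexlt_trans by auto
qed

lemma adjs_distinct: "adjs L \<Longrightarrow> distinct L"
proof (induction L)
  case Nil then show ?case by simp
next
  case (Cons x L)
  have "adjs L" using Cons(2) by (cases L) auto
  moreover have "x \<notin> set L" using adjs_all[OF Cons(2)] lexlt_irrefl by auto
  ultimately show ?case using Cons(1) by simp
qed

lemma certs:
  assumes "list_all (cert m) L" "adjs L"
  shows "set L \<subseteq> V m" "card (set L) = length L"
  using assms cert_V by (auto simp: list_all_iff)[1] (use assms(2) adjs_distinct distinct_card in metis)

definition cntp :: "(nat \<Rightarrow> nat \<Rightarrow> bool) \<Rightarrow> nat list \<Rightarrow> nat list \<Rightarrow> nat" where
  "cntp Q xs ys = sum_list (map (\<lambda>x. length (filter (Q x) ys)) xs)"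

lemma cntp_card:
  assumes "distinct La" "distinct Lb"
  shows "card {p \<in> set La \<times> set Lb. Q (f (fst p)) (g (snd p))} = cntp Q (map f La) (map g Lb)"
  using assms
proof (induction La)
  case Nil then show ?case by (simp add: cntp_def)
next
  case (Cons a La)
  have e: "{p \<in> set (a#La) \<times> set Lb. Q (f (fst p)) (g (snd p))} =
        Pair a ` {y \<in> set Lb. Q (f a) (g y)} \<union> {p \<in> set La \<times> set Lb. Q (f (fst p)) (g (snd p))}"
    by auto
  have d: "Pair a ` {y \<in> set Lb. Q (f a) (g y)} \<inter> {p \<in> set La \<times> set Lb. Q (f (fst p)) (g (snd p))} = {}"
    using Cons(2) by auto
  have "card (Pair a ` {y \<in> set Lb. Q (f a) (g y)}) = card {y \<in> set Lb. Q (f a) (g y)}"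
    by (rule card_image) (auto simp: inj_on_def)
  also have "\<dots> = length (filter (Q (f a)) (map g Lb))"
  proof -
    have "{y \<in> set Lb. Q (f a) (g y)} = set (filter (\<lambda>y. Q (f a) (g y)) Lb)" by auto
    thus ?thesis using distinct_card[of "filter (\<lambda>y. Q (f a) (g y)) Lb"] Cons(3)
      by (simp add: filter_map o_def)
  qed
  finally show ?case unfolding e using Cons d by (simp add: card_Un_disjoint cntp_def)
qed


definition Cd :: "nat list \<Rightarrow> bool" where
  "Cd t \<longleftrightarrow> t \<noteq> filter even t @ filter odd t \<and> t \<noteq> filter odd t @ filter even t \<and>
                  t \<noteq> sw (filter even t) (filter odd t) \<and> t \<noteq> sw (filter odd t) (filter even t)"

lemma base_gen:
  assumes n4: "4 \<le> n"
    and a: "list_all (cert (n div 2)) La" "adjs La"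
    and b: "list_all (cert (n - n div 2)) Lb" "adjs Lb"
    and c: "list_all (cert n) Lc" "adjs Lc" "list_all Cd Lc"
  shows "2 * length La * length Lb + cntp (\<lambda>x y. okp n (2*x) (2*y - 1)) (map last La) (map hd Lb)
         + cntp (\<lambda>x y. okp n (2*x - 1) (2*y)) (map last Lb) (map hd La) + length Lc \<le> M n"
proof -
  have A: "set La \<subseteq> V (n div 2)" "card (set La) = length La" using certs[OF a] by auto
  have B: "set Lb \<subseteq> V (n - n div 2)" "card (set Lb) = length Lb" using certs[OF b] by auto
  have C: "set Lc \<subseteq> V n" "card (set Lc) = length Lc" using certs[OF c(1,2)] by auto
  have dA: "distinct La" "distinct Lb" using a(2) b(2) adjs_distinct by auto
  have Cd': "\<forall>t\<in>set Lc. t \<noteq> filter even t @ filter odd t \<and> t \<noteq> filter odd t @ filter even t \<and>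
                  t \<noteq> sw (filter even t) (filter odd t) \<and> t \<noteq> sw (filter odd t) (filter even t)"
    using c(3) unfolding Cd_def by (simp add: list_all_iff)
  have s3: "card {p \<in> set La \<times> set Lb. okp n (2 * last (fst p)) (2 * hd (snd p) - 1)}
      = cntp (\<lambda>x y. okp n (2*x) (2*y - 1)) (map last La) (map hd Lb)"
    using cntp_card[OF dA, of "\<lambda>x y. okp n (2*x) (2*y - 1)" last hd] by simp
  have s4: "card {p \<in> set Lb \<times> set La. okp n (2 * last (fst p) - 1) (2 * hd (snd p))}
      = cntp (\<lambda>x y. okp n (2*x - 1) (2*y)) (map last Lb) (map hd La)"
    using cntp_card[OF dA(2) dA(1), of "\<lambda>x y. okp n (2*x - 1) (2*y)" last hd] by simp
  show ?thesis using main[OF n4 A(1) B(1) C(1) Cd'] A(2) B(2) C(2) s3 s4 by simp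
qed

lemma real_bound:
  assumes "(2132::nat) ^ n \<le> (2 * K) ^ 10" "K \<le> M n"
  shows "(1/2) * (2132 powr (1/10)) ^ n \<le> real (M n)"
proof -
  define c :: real where "c = 2132 powr (1/10)"
  have c0: "0 \<le> c" unfolding c_def by simp
  have c10: "c ^ 10 = 2132" unfolding c_def by (simp add: powr_realpow [symmetric] powr_powr)
  have "(c ^ n) ^ 10 = (2132::real) ^ n" by (metis c10 mult.commute power_mult)
  also have "\<dots> \<le> (2 * real K) ^ 10" 
  proof -
    have "real (2132 ^ n) \<le> real ((2 * K) ^ 10)" using assms(1) by (simp only: of_nat_le_iff)
    thus ?thesis by simp
  qed
  finally have "c ^ n \<le> 2 * real K" using power_mono_iff[of "c^n" "2 * real K" 10] c0 by simp
  thus ?thesis using assms(2) unfolding c_def by simp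
qed

definition L4 :: "nat list list" where
  "L4 = [[1,3,2,4],
  [1,3,4,2],
  [2,1,4,3],
  [2,4,1,3],
  [2,4,3,1],
  [3,1,2,4],
  [3,1,4,2],
  [3,4,1,2],
  [4,2,1,3],
  [4,2,3,1]]"

definition L5 :: "nat list list" where
  "L5 = [[1,5,3,2,4],
  [1,5,3,4,2],
  [2,1,4,5,3],
  [2,4,1,5,3],
  [2,4,3,1,5],
  [2,4,3,5,1],
  [2,4,5,1,3],
  [3,1,2,5,4],
  [3,1,5,2,4],
  [3,1,5,4,2],
  [3,5,1,2,4],
  [3,5,1,4,2],
  [3,5,4,1,2],
  [4,2,1,5,3],
  [4,2,3,1,5],
  [4,2,3,5,1],
  [4,2,5,1,3],
  [4,5,2,1,3],
  [5,1,3,2,4],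
  [5,1,3,4,2]]"

definition L6 :: "nat list list" where
  "L6 = [[1,5,3,2,6,4],
  [1,5,3,4,2,6],
  [1,5,3,4,6,2],
  [1,5,3,6,2,4],
  [1,5,6,3,2,4],
  [2,1,6,4,5,3],
  [2,6,1,4,5,3],
  [2,6,4,1,5,3],
  [2,6,4,3,1,5],
  [2,6,4,3,5,1],
  [2,6,4,5,1,3],
  [3,1,2,5,6,4],
  [3,1,5,2,6,4],
  [3,1,5,4,2,6],
  [3,1,5,4,6,2],
  [3,1,5,6,2,4],
  [3,5,1,2,6,4],
  [3,5,1,4,2,6],
  [3,5,1,4,6,2],
  [3,5,1,6,2,4],
  [3,5,4,1,2,6],
  [3,5,4,1,6,2],
  [3,5,4,6,1,2],
  [3,5,6,1,2,4],
  [4,2,1,6,5,3],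
  [4,2,3,1,6,5],
  [4,2,3,6,1,5],
  [4,2,3,6,5,1],
  [4,2,6,1,5,3],
  [4,2,6,3,1,5],
  [4,2,6,3,5,1],
  [4,2,6,5,1,3],
  [4,6,2,1,5,3],
  [4,6,2,3,1,5],
  [4,6,2,3,5,1],
  [4,6,2,5,1,3],
  [4,6,5,2,1,3],
  [5,1,3,2,6,4],
  [5,1,3,4,2,6],
  [5,1,3,4,6,2],
  [5,1,3,6,2,4],
  [5,1,6,3,2,4],
  [5,6,1,3,2,4],
  [6,2,1,4,5,3],
  [6,2,4,1,5,3],
  [6,2,4,3,1,5],
  [6,2,4,3,5,1],
  [6,2,4,5,1,3]]"

definition L7 :: "nat list list" where
  "L7 = [[1,5,3,2,7,6,4],
  [1,5,3,7,2,6,4],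
  [1,5,3,7,4,2,6],
  [1,5,3,7,4,6,2],
  [1,5,3,7,6,2,4],
  [1,5,7,3,2,6,4],
  [1,5,7,3,4,2,6],
  [1,5,7,3,4,6,2],
  [1,5,7,3,6,2,4],
  [1,5,7,6,3,2,4],
  [2,6,4,1,5,3,7],
  [2,6,4,1,5,7,3],
  [2,6,4,3,1,7,5],
  [2,6,4,3,7,1,5],
  [2,6,4,3,7,5,1],
  [2,6,4,5,1,3,7],
  [2,6,4,5,1,7,3],
  [2,6,4,5,7,1,3],
  [2,6,4,7,3,1,5],
  [2,6,4,7,3,5,1],
  [3,1,2,7,5,6,4],
  [3,1,7,2,5,6,4],
  [3,1,7,5,2,6,4],
  [3,1,7,5,4,2,6],
  [3,1,7,5,4,6,2],
  [3,1,7,5,6,2,4],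
  [3,7,1,2,5,6,4],
  [3,7,1,5,2,6,4],
  [3,7,1,5,4,2,6],
  [3,7,1,5,4,6,2],
  [3,7,1,5,6,2,4],
  [3,7,5,1,2,6,4],
  [3,7,5,1,4,2,6],
  [3,7,5,1,4,6,2],
  [3,7,5,1,6,2,4],
  [3,7,5,6,1,2,4],
  [4,2,1,6,5,3,7],
  [4,2,1,6,5,7,3],
  [4,2,3,1,6,7,5],
  [4,2,3,6,1,7,5],
  [4,2,3,6,7,1,5],
  [4,2,3,6,7,5,1],
  [4,2,6,1,5,3,7],
  [4,2,6,1,5,7,3],
  [4,2,6,3,1,7,5],
  [4,2,6,3,7,1,5],
  [4,2,6,3,7,5,1],
  [4,2,6,5,1,3,7],
  [4,2,6,5,1,7,3],
  [4,2,6,5,7,1,3],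
  [4,2,6,7,3,1,5],
  [4,2,6,7,3,5,1],
  [4,6,2,1,5,3,7],
  [4,6,2,1,5,7,3],
  [4,6,2,3,1,7,5],
  [4,6,2,3,7,1,5],
  [4,6,2,3,7,5,1],
  [4,6,2,5,1,3,7],
  [4,6,2,5,1,7,3],
  [4,6,2,5,7,1,3],
  [4,6,2,7,3,1,5],
  [4,6,2,7,3,5,1],
  [4,6,5,2,1,3,7],
  [4,6,5,2,1,7,3],
  [4,6,5,2,7,1,3],
  [4,6,5,7,2,1,3],
  [4,6,7,2,3,1,5],
  [4,6,7,2,3,5,1],
  [5,1,3,2,7,6,4],
  [5,1,3,7,2,6,4],
  [5,1,3,7,4,2,6],
  [5,1,3,7,4,6,2],
  [5,1,3,7,6,2,4],
  [5,1,7,3,2,6,4],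
  [5,1,7,3,4,2,6],
  [5,1,7,3,4,6,2],
  [5,1,7,3,6,2,4],
  [5,1,7,6,3,2,4],
  [5,7,1,3,2,6,4],
  [5,7,1,3,4,2,6],
  [5,7,1,3,4,6,2],
  [5,7,1,3,6,2,4],
  [5,7,1,6,3,2,4],
  [5,7,6,1,3,2,4],
  [6,2,4,1,5,3,7],
  [6,2,4,1,5,7,3],
  [6,2,4,3,1,7,5],
  [6,2,4,3,7,1,5],
  [6,2,4,3,7,5,1],
  [6,2,4,5,1,3,7],
  [6,2,4,5,1,7,3],
  [6,2,4,5,7,1,3],
  [6,2,4,7,3,1,5],
  [6,2,4,7,3,5,1],
  [7,3,1,2,5,6,4],
  [7,3,1,5,2,6,4],
  [7,3,1,5,4,2,6],
  [7,3,1,5,4,6,2],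
  [7,3,1,5,6,2,4],
  [7,3,5,1,2,6,4],
  [7,3,5,1,4,2,6],
  [7,3,5,1,4,6,2],
  [7,3,5,1,6,2,4],
  [7,3,5,6,1,2,4]]"

definition C9 :: "nat list list" where
  "C9 = [[2,6,4,3,1,8,7,9,5],
  [3,7,5,1,4,2,9,8,6],
  [3,7,5,9,6,8,1,2,4],
  [4,2,1,8,6,9,5,3,7],
  [4,2,1,8,6,9,5,7,3],
  [4,8,6,7,9,2,3,1,5],
  [5,1,3,2,9,7,6,4,8],
  [5,1,3,2,9,7,6,8,4],
  [5,9,7,8,1,3,4,2,6],
  [5,9,7,8,1,3,4,6,2],
  [6,2,4,3,1,8,7,9,5],
  [6,8,9,2,4,1,5,3,7],
  [6,8,9,2,4,1,5,7,3],
  [7,3,5,1,4,2,9,8,6],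
  [7,3,5,9,6,8,1,2,4],
  [8,4,6,7,9,2,3,1,5]]"

definition C10 :: "nat list list" where
  "C10 = [[1,9,5,7,8,10,3,4,2,6],
  [2,10,6,4,3,1,8,7,9,5],
  [3,7,5,1,4,2,9,8,10,6],
  [3,7,5,9,6,10,1,2,4,8],
  [3,7,5,9,6,10,1,2,8,4],
  [3,7,5,9,6,10,1,8,2,4],
  [3,7,5,9,6,10,8,1,2,4],
  [3,7,5,9,8,10,1,4,2,6],
  [3,7,9,10,1,5,2,6,4,8],
  [3,7,9,10,1,5,2,6,8,4],
  [4,2,1,8,10,6,9,5,3,7],
  [4,2,1,8,10,6,9,5,7,3],
  [4,2,8,1,10,6,9,5,3,7],
  [4,2,8,1,10,6,9,5,7,3],
  [4,8,2,1,10,6,9,5,3,7],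
  [4,8,2,1,10,6,9,5,7,3],
  [4,8,6,2,3,1,10,7,9,5],
  [4,8,6,2,5,1,3,10,9,7],
  [4,8,6,2,5,1,10,3,9,7],
  [4,8,6,2,5,1,10,9,3,7],
  [4,8,6,2,5,1,10,9,7,3],
  [4,8,6,10,7,9,2,3,1,5],
  [5,1,3,2,9,7,10,6,4,8],
  [5,1,3,2,9,7,10,6,8,4],
  [5,1,9,7,8,10,3,4,2,6],
  [5,9,1,7,8,10,3,4,2,6],
  [5,9,7,1,8,10,3,4,2,6],
  [5,9,7,8,1,3,4,2,10,6],
  [5,9,7,8,1,3,4,6,2,10],
  [5,9,7,8,1,3,4,6,10,2],
  [5,9,7,8,1,3,4,10,2,6],
  [5,9,7,8,1,3,10,4,2,6],
  [5,9,7,8,1,10,3,4,2,6],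
  [5,9,7,8,10,1,3,4,2,6],
  [5,9,7,10,1,3,2,6,4,8],
  [5,9,7,10,1,3,2,6,8,4],
  [6,2,4,1,10,8,9,5,3,7],
  [6,2,4,1,10,8,9,5,7,3],
  [6,2,4,3,1,10,8,7,9,5],
  [6,2,4,3,10,1,8,7,9,5],
  [6,2,4,3,10,8,1,7,9,5],
  [6,2,4,3,10,8,7,1,9,5],
  [6,2,4,3,10,8,7,5,1,9],
  [6,2,4,3,10,8,7,5,9,1],
  [6,2,4,3,10,8,7,9,1,5],
  [6,2,4,10,3,1,8,7,9,5],
  [6,2,10,4,3,1,8,7,9,5],
  [6,10,2,4,3,1,8,7,9,5],
  [6,10,8,9,2,4,1,5,3,7],
  [6,10,8,9,2,4,1,5,7,3],
  [7,3,5,1,4,2,9,8,10,6],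
  [7,3,5,9,6,10,1,2,4,8],
  [7,3,5,9,6,10,1,2,8,4],
  [7,3,5,9,6,10,1,8,2,4],
  [7,3,5,9,6,10,8,1,2,4],
  [7,3,5,9,8,10,1,4,2,6],
  [7,3,9,10,1,5,2,6,4,8],
  [7,3,9,10,1,5,2,6,8,4],
  [7,9,3,10,1,5,2,6,4,8],
  [7,9,3,10,1,5,2,6,8,4],
  [7,9,10,3,1,5,2,6,4,8],
  [7,9,10,3,1,5,2,6,8,4],
  [8,4,2,1,10,6,9,5,3,7],
  [8,4,2,1,10,6,9,5,7,3],
  [8,4,6,2,3,1,10,7,9,5],
  [8,4,6,2,5,1,3,10,9,7],
  [8,4,6,2,5,1,10,3,9,7],
  [8,4,6,2,5,1,10,9,3,7],
  [8,4,6,2,5,1,10,9,7,3],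
  [8,4,6,10,7,9,2,3,1,5],
  [9,1,5,7,8,10,3,4,2,6],
  [10,2,6,4,3,1,8,7,9,5]]"

lemma L4_ok: "list_all (cert 4) L4" "adjs L4" by (simp_all add: L4_def cert_def)
lemma L5_ok: "list_all (cert 5) L5" "adjs L5" by (simp_all add: L5_def cert_def)
lemma L6_ok: "list_all (cert 6) L6" "adjs L6" by (simp_all add: L6_def cert_def)
lemma L7_ok: "list_all (cert 7) L7" "adjs L7" by (simp_all add: L7_def cert_def)
lemma C9_ok: "list_all (cert 9) C9" "adjs C9" "list_all Cd C9" by (simp_all add: C9_def cert_def Cd_def sw_def)
lemma C10_ok: "list_all (cert 10) C10" "adjs C10" "list_all Cd C10" by (simp_all add: C10_def cert_def Cd_def sw_def)

lemma b8: "258 \<le> M 8"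
proof -
  have "2 * length L4 * length L4 + cntp (\<lambda>x y. okp 8 (2*x) (2*y - 1)) (map last L4) (map hd L4)
         + cntp (\<lambda>x y. okp 8 (2*x - 1) (2*y)) (map last L4) (map hd L4) + length ([]::nat list list) \<le> M 8"
    by (rule base_gen) (use L4_ok in simp_all)
  moreover have "2 * length L4 * length L4 + cntp (\<lambda>x y. okp 8 (2*x) (2*y - 1)) (map last L4) (map hd L4)
         + cntp (\<lambda>x y. okp 8 (2*x - 1) (2*y)) (map last L4) (map hd L4) + length ([]::nat list list) = 258"
    by (simp add: L4_def cntp_def okp_def)
  ultimately show ?thesis by simp
qed



lemma sum_list_count:
  assumes "finite S" "set xs \<subseteq> S"
  shows "sum_list (map f xs) = (\<Sum>v\<in>S. count_list xs v * f v)"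
  using assms(2)
proof (induction xs)
  case Nil then show ?case by simp
next
  case (Cons x xs)
  have "(\<Sum>v\<in>S. count_list (x#xs) v * f v) = (\<Sum>v\<in>S. (if x = v then f v else 0) + count_list xs v * f v)"
    by (intro sum.cong) (auto simp: algebra_simps)
  also have "\<dots> = (\<Sum>v\<in>S. (if x = v then f v else 0)) + (\<Sum>v\<in>S. count_list xs v * f v)"
    by (simp add: sum.distrib)
  also have "(\<Sum>v\<in>S. (if x = v then f v else 0)) = f x" using Cons(2) assms(1) by (simp add: sum.delta)
  finally show ?case using Cons by simp
qed

definition cntp2 :: "(nat \<Rightarrow> nat \<Rightarrow> bool) \<Rightarrow> nat list \<Rightarrow> nat list \<Rightarrow> nat list \<Rightarrow> nat" where
  "cntp2 Q vs xs ys = sum_list (map (\<lambda>v. count_list xs v * sum_list (map (\<lambda>w. if Q v w then count_list ys w else 0) vs)) vs)"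

lemma cntp_cntp2:
  assumes "distinct vs" "set xs \<subseteq> set vs" "set ys \<subseteq> set vs"
  shows "cntp Q xs ys = cntp2 Q vs xs ys"
proof -
  have l: "length (filter P ys) = sum_list (map (\<lambda>w. if P w then count_list ys w else 0) vs)" for P
  proof -
    have "length (filter P ys) = sum_list (map (\<lambda>y. if P y then 1 else 0) ys)"
      by (induction ys) auto
    also have "\<dots> = (\<Sum>v\<in>set vs. count_list ys v * (if P v then 1 else 0))"
      by (rule sum_list_count) (use assms in auto)
    also have "\<dots> = sum_list (map (\<lambda>w. if P w then count_list ys w else 0) vs)"
      using assms(1) by (simp add: sum_list_distinct_conv_sum_set) (intro sum.cong, auto)
    finally show ?thesis .
  qed
  have "cntp Q xs ys = (\<Sum>v\<in>set vs. count_list xs v * length (filter (Q v) ys))"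
    unfolding cntp_def by (rule sum_list_count) (use assms in auto)
  also have "\<dots> = cntp2 Q vs xs ys"
    unfolding cntp2_def l using assms(1) by (simp add: sum_list_distinct_conv_sum_set)
  finally show ?thesis .
qed

lemma L4_last: "map last L4 = [4,2,3,3,1,4,2,2,3,1]" by (simp add: L4_def)
lemma L4_hd: "map hd L4 = [1,1,2,2,2,3,3,3,4,4]" by (simp add: L4_def)
lemma L4_len: "length L4 = 10" by (simp add: L4_def)
lemma L5_last: "map last L5 = [4,2,3,3,5,1,3,4,4,2,4,2,2,3,5,1,3,3,4,2]" by (simp add: L5_def)
lemma L5_hd: "map hd L5 = [1,1,2,2,2,2,2,3,3,3,3,3,3,4,4,4,4,4,5,5]" by (simp add: L5_def)
lemma L5_len: "length L5 = 20" by (simp add: L5_def)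
lemma L6_last: "map last L6 = [4,6,2,4,4,3,3,3,5,1,3,4,4,6,2,4,4,6,2,4,6,2,2,4,3,5,5,1,3,5,1,3,3,5,1,3,3,4,6,2,4,4,4,3,3,5,1,3]" by (simp add: L6_def)
lemma L6_hd: "map hd L6 = [1,1,1,1,1,2,2,2,2,2,2,3,3,3,3,3,3,3,3,3,3,3,3,3,4,4,4,4,4,4,4,4,4,4,4,4,4,5,5,5,5,5,5,6,6,6,6,6]" by (simp add: L6_def)
lemma L6_len: "length L6 = 48" by (simp add: L6_def)
lemma L7_last: "map last L7 = [4,4,6,2,4,4,6,2,4,4,7,3,5,5,1,7,3,3,5,1,4,4,4,6,2,4,4,4,6,2,4,4,6,2,4,4,7,3,5,5,5,1,7,3,5,5,1,7,3,3,5,1,7,3,5,5,1,7,3,3,5,1,7,3,3,3,5,1,4,4,6,2,4,4,6,2,4,4,4,6,2,4,4,4,7,3,5,5,1,7,3,3,5,1,4,4,6,2,4,4,6,2,4,4]" by (simp add: L7_def)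
lemma L7_hd: "map hd L7 = [1,1,1,1,1,1,1,1,1,1,2,2,2,2,2,2,2,2,2,2,3,3,3,3,3,3,3,3,3,3,3,3,3,3,3,3,4,4,4,4,4,4,4,4,4,4,4,4,4,4,4,4,4,4,4,4,4,4,4,4,4,4,4,4,4,4,4,4,5,5,5,5,5,5,5,5,5,5,5,5,5,5,5,5,6,6,6,6,6,6,6,6,6,6,7,7,7,7,7,7,7,7,7,7]" by (simp add: L7_def)
lemma L7_len: "length L7 = 104" by (simp add: L7_def)
lemma C9_len: "length C9 = 16" by (simp add: C9_def)
lemma C10_len: "length C10 = 72" by (simp add: C10_def)

lemma b9: "496 \<le> M 9"
proof -
  have "2 * length L4 * length L5 + cntp (\<lambda>x y. okp 9 (2*x) (2*y - 1)) (map last L4) (map hd L5)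
         + cntp (\<lambda>x y. okp 9 (2*x - 1) (2*y)) (map last L5) (map hd L4) + length C9 \<le> M 9"
    by (rule base_gen) (use L4_ok L5_ok C9_ok in simp_all)
  moreover have "2 * length L4 * length L5 + cntp (\<lambda>x y. okp 9 (2*x) (2*y - 1)) (map last L4) (map hd L5)
         + cntp (\<lambda>x y. okp 9 (2*x - 1) (2*y)) (map last L5) (map hd L4) + length C9 = 496"
    by (simp add: cntp_cntp2[of "[1,2,3,4,5,6,7]"] C9_len L4_hd L4_last L4_len L5_hd L5_last L5_len cntp2_def okp_def)
  ultimately show ?thesis by simp
qed

lemma b10: "1066 \<le> M 10"
proof -
  have "2 * length L5 * length L5 + cntp (\<lambda>x y. okp 10 (2*x) (2*y - 1)) (map last L5) (map hd L5)
         + cntp (\<lambda>x y. okp 10 (2*x - 1) (2*y)) (map last L5) (map hd L5) + length C10 \<le> M 10"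
    by (rule base_gen) (use L5_ok L5_ok C10_ok in simp_all)
  moreover have "2 * length L5 * length L5 + cntp (\<lambda>x y. okp 10 (2*x) (2*y - 1)) (map last L5) (map hd L5)
         + cntp (\<lambda>x y. okp 10 (2*x - 1) (2*y)) (map last L5) (map hd L5) + length C10 = 1066"
    by (simp add: cntp_cntp2[of "[1,2,3,4,5,6,7]"] C10_len L5_hd L5_last L5_len cntp2_def okp_def)
  ultimately show ?thesis by simp
qed

lemma b11: "2332 \<le> M 11"
proof -
  have "2 * length L5 * length L6 + cntp (\<lambda>x y. okp 11 (2*x) (2*y - 1)) (map last L5) (map hd L6)
         + cntp (\<lambda>x y. okp 11 (2*x - 1) (2*y)) (map last L6) (map hd L5) + length ([]::nat list list) \<le> M 11"
    by (rule base_gen) (use L5_ok L6_ok in simp_all)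
  moreover have "2 * length L5 * length L6 + cntp (\<lambda>x y. okp 11 (2*x) (2*y - 1)) (map last L5) (map hd L6)
         + cntp (\<lambda>x y. okp 11 (2*x - 1) (2*y)) (map last L6) (map hd L5) + length ([]::nat list list) = 2332"
    by (simp add: cntp_cntp2[of "[1,2,3,4,5,6,7]"] L5_hd L5_last L5_len L6_hd L6_last L6_len cntp2_def okp_def)
  ultimately show ?thesis by simp
qed

lemma b12: "5664 \<le> M 12"
proof -
  have "2 * length L6 * length L6 + cntp (\<lambda>x y. okp 12 (2*x) (2*y - 1)) (map last L6) (map hd L6)
         + cntp (\<lambda>x y. okp 12 (2*x - 1) (2*y)) (map last L6) (map hd L6) + length ([]::nat list list) \<le> M 12"
    by (rule base_gen) (use L6_ok L6_ok in simp_all)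
  moreover have "2 * length L6 * length L6 + cntp (\<lambda>x y. okp 12 (2*x) (2*y - 1)) (map last L6) (map hd L6)
         + cntp (\<lambda>x y. okp 12 (2*x - 1) (2*y)) (map last L6) (map hd L6) + length ([]::nat list list) = 5664"
    by (simp add: cntp_cntp2[of "[1,2,3,4,5,6,7]"] L6_hd L6_last L6_len cntp2_def okp_def)
  ultimately show ?thesis by simp
qed

lemma b13: "12088 \<le> M 13"
proof -
  have "2 * length L6 * length L7 + cntp (\<lambda>x y. okp 13 (2*x) (2*y - 1)) (map last L6) (map hd L7)
         + cntp (\<lambda>x y. okp 13 (2*x - 1) (2*y)) (map last L7) (map hd L6) + length ([]::nat list list) \<le> M 13"
    by (rule base_gen) (use L6_ok L7_ok in simp_all)
  moreover have "2 * length L6 * length L7 + cntp (\<lambda>x y. okp 13 (2*x) (2*y - 1)) (map last L6) (map hd L7)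
         + cntp (\<lambda>x y. okp 13 (2*x - 1) (2*y)) (map last L7) (map hd L6) + length ([]::nat list list) = 12088"
    by (simp add: cntp_cntp2[of "[1,2,3,4,5,6,7]"] L6_hd L6_last L6_len L7_hd L7_last L7_len cntp2_def okp_def)
  ultimately show ?thesis by simp
qed

lemma b14: "26944 \<le> M 14"
proof -
  have "2 * length L7 * length L7 + cntp (\<lambda>x y. okp 14 (2*x) (2*y - 1)) (map last L7) (map hd L7)
         + cntp (\<lambda>x y. okp 14 (2*x - 1) (2*y)) (map last L7) (map hd L7) + length ([]::nat list list) \<le> M 14"
    by (rule base_gen) (use L7_ok L7_ok in simp_all)
  moreover have "2 * length L7 * length L7 + cntp (\<lambda>x y. okp 14 (2*x) (2*y - 1)) (map last L7) (map hd L7)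
         + cntp (\<lambda>x y. okp 14 (2*x - 1) (2*y)) (map last L7) (map hd L7) + length ([]::nat list list) = 26944"
    by (simp add: cntp_cntp2[of "[1,2,3,4,5,6,7]"] L7_hd L7_last L7_len cntp2_def okp_def)
  ultimately show ?thesis by simp
qed


lemma block: "4 \<le> n \<Longrightarrow> 2 * M (n div 2) * M (n - n div 2) \<le> M n"
  using main[of n "V (n div 2)" "V (n - n div 2)" "{}"] unfolding M_V by simp

lemma b7: "104 \<le> M 7"
proof -
  have "card (set L7) \<le> card (V 7)" using certs(1)[OF L7_ok] finite_V by (intro card_mono) auto
  thus ?thesis using certs(2)[OF L7_ok] L7_len unfolding M_V by simp
qed

lemma b15: "53664 \<le> M 15"
proof -
  have "2 * M 7 * M 8 \<le> M 15" using block[of 15] by simp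
  moreover have "2 * 104 * 258 \<le> 2 * M 7 * M 8" using b7 b8 by (intro mult_mono) auto
  ultimately show ?thesis by simp
qed

lemma base_real:
  assumes "8 \<le> n" "n \<le> 15"
  shows "(1/2) * (2132 powr (1/10)) ^ n \<le> real (M n)"
proof -
  consider "n = 8" | "n = 9" | "n = 10" | "n = 11" | "n = 12" | "n = 13" | "n = 14" | "n = 15"
    using assms by linarith
  thus ?thesis
  proof cases
    case 1 thus ?thesis using real_bound[OF _ b8] by simp
  next
    case 2 thus ?thesis using real_bound[OF _ b9] by simp
  next
    case 3 thus ?thesis using real_bound[OF _ b10] by simp
  next
    case 4 thus ?thesis using real_bound[OF _ b11] by simp
  next
    case 5 thus ?thesis using real_bound[OF _ b12] by simp
  next
    case 6 thus ?thesis using real_bound[OF _ b13] by simp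
  next
    case 7 thus ?thesis using real_bound[OF _ b14] by simp
  next
    case 8 thus ?thesis using real_bound[OF _ b15] by simp
  qed
qed

theorem theorem1:
  fixes n :: nat
  assumes "n \<ge> 8"
  shows "real (M n) \<ge> (1/2) * (2132 powr (1/10)) ^ n"
  using assms
proof (induction n rule: less_induct)
  case (less n)
  show ?case
  proof (cases "n \<le> 15")
    case True
    thus ?thesis using base_real less.prems by simp
  next
    case False
    define a where "a = n div 2"
    define b where "b = n - n div 2"
    define c :: real where "c = 2132 powr (1/10)"
    have ab: "8 \<le> a" "a < n" "8 \<le> b" "b < n" "a + b = n" using False unfolding a_def b_def by auto
    have ia: "(1/2) * c ^ a \<le> real (M a)" using less.IH[OF ab(2) ab(1)] unfolding c_def by simp
    have ib: "(1/2) * c ^ b \<le> real (M b)" using less.IH[OF ab(4) ab(3)] unfolding c_def by simp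
    have c0: "0 \<le> c" unfolding c_def by simp
    have "2 * M a * M b \<le> M n" using block[of n] False unfolding a_def b_def by simp
    hence blk: "2 * real (M a) * real (M b) \<le> real (M n)" by (metis of_nat_le_iff of_nat_mult of_nat_numeral)
    have "(1/2) * c ^ n = 2 * ((1/2) * c ^ a) * ((1/2) * c ^ b)"
      using ab(5) by (simp flip: power_add)
    also have "\<dots> \<le> 2 * real (M a) * real (M b)"
      using ia ib c0 by (intro mult_mono) auto
    finally show ?thesis using blk unfolding c_def by simp
  qed
qed

end
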